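(* Let $\mathcal{A}\subseteq\mathcal{B}$ be sub-$\sigma$-algebras of a complete probability space $(\Omega,\mathcal{F},P)$. Let $x:L_\infty(\mathcal{B})\to L_\infty(\mathcal{A})$ be a linear operator such that \[x(X)\le M(Y)\qquad\text{for all } X\in L_\infty(\mathcal{B}),\ Y\in L^+_\infty(\mathcal{B}) \text{ with } X\le Y,\] for some sublinear operator $M:L^+_\infty(\mathcal{B})\to L^+_\infty(\mathcal{A})$. Then $x$ is monotone. Moreover: (i) if $M$ is weak $\mathcal{A}$-homogeneous, then $x$ is weak $\mathcal{A}$-homogeneous; (ii) if $M$ is regular, then $x$ is continuous from above.
   Context: All (in)equalities hold $P$-a.s. Sublinear: $M(X+Y)\le M(X)+M(Y)$, $M(\lambda X)=\lambda M(X)$ for real $\lambda\ge0$. Weak $\mathcal{A}$-homogeneous: $T(1_AX)=1_AT(X)$ for every $A\in\mathcal{A}$ and every $X$ in the domain of the operator $T$. Regular: for every nonincreasing sequence $X_n\downarrow0$ $P$-a.s., $M(X_n)\to0$ $P$-a.s. Continuous from above: for every nonincreasing sequence $X_n$ with $P$-a.s. limit $X$, $x(X_n)\downarrow x(X)$ $P$-a.s. *)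

theory Defs
  imports "HOL-Probability.Probability"
begin

text \<open>L-infinity of a sub-sigma-algebra B of the probability space P, represented by
  bounded-a.s. B-measurable real functions; all (in)equalities are P-a.s.\<close>

definition Linf :: "'a measure \<Rightarrow> 'a measure \<Rightarrow> ('a \<Rightarrow> real) set" where
  "Linf P B = {X. X \<in> borel_measurable B \<and> (\<exists>C. AE w in P. \<bar>X w\<bar> \<le> C)}"

definition Linf_pos :: "'a measure \<Rightarrow> 'a measure \<Rightarrow> ('a \<Rightarrow> real) set" where
  "Linf_pos P B = {X \<in> Linf P B. AE w in P. 0 \<le> X w}"

definition operator_on :: "'a measure \<Rightarrow> ('a \<Rightarrow> real) set \<Rightarrow> ('a \<Rightarrow> real) set
    \<Rightarrow> (('a \<Rightarrow> real) \<Rightarrow> ('a \<Rightarrow> real)) \<Rightarrow> bool" where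
  "operator_on P D E T \<longleftrightarrow> (\<forall>X\<in>D. T X \<in> E) \<and>
     (\<forall>X\<in>D. \<forall>Y\<in>D. (AE w in P. X w = Y w) \<longrightarrow> (AE w in P. T X w = T Y w))"

definition linear_op :: "'a measure \<Rightarrow> ('a \<Rightarrow> real) set
    \<Rightarrow> (('a \<Rightarrow> real) \<Rightarrow> ('a \<Rightarrow> real)) \<Rightarrow> bool" where
  "linear_op P D T \<longleftrightarrow>
     (\<forall>X\<in>D. \<forall>Y\<in>D. AE w in P. T (\<lambda>v. X v + Y v) w = T X w + T Y w) \<and>
     (\<forall>X\<in>D. \<forall>c::real. AE w in P. T (\<lambda>v. c * X v) w = c * T X w)"

definition sublinear_op :: "'a measure \<Rightarrow> ('a \<Rightarrow> real) set
    \<Rightarrow> (('a \<Rightarrow> real) \<Rightarrow> ('a \<Rightarrow> real)) \<Rightarrow> bool" where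
  "sublinear_op P D T \<longleftrightarrow>
     (\<forall>X\<in>D. \<forall>Y\<in>D. AE w in P. T (\<lambda>v. X v + Y v) w \<le> T X w + T Y w) \<and>
     (\<forall>X\<in>D. \<forall>c::real. 0 \<le> c \<longrightarrow> (AE w in P. T (\<lambda>v. c * X v) w = c * T X w))"

definition monotone_op :: "'a measure \<Rightarrow> ('a \<Rightarrow> real) set
    \<Rightarrow> (('a \<Rightarrow> real) \<Rightarrow> ('a \<Rightarrow> real)) \<Rightarrow> bool" where
  "monotone_op P D T \<longleftrightarrow>
     (\<forall>X\<in>D. \<forall>Y\<in>D. (AE w in P. X w \<le> Y w) \<longrightarrow> (AE w in P. T X w \<le> T Y w))"

definition weak_hom_op :: "'a measure \<Rightarrow> 'a measure \<Rightarrow> ('a \<Rightarrow> real) set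
    \<Rightarrow> (('a \<Rightarrow> real) \<Rightarrow> ('a \<Rightarrow> real)) \<Rightarrow> bool" where
  "weak_hom_op P A D T \<longleftrightarrow>
     (\<forall>S\<in>sets A. \<forall>X\<in>D.
        AE w in P. T (\<lambda>v. indicator S v * X v) w = indicator S w * T X w)"

definition regular_op :: "'a measure \<Rightarrow> ('a \<Rightarrow> real) set
    \<Rightarrow> (('a \<Rightarrow> real) \<Rightarrow> ('a \<Rightarrow> real)) \<Rightarrow> bool" where
  "regular_op P D T \<longleftrightarrow>
     (\<forall>Xs :: nat \<Rightarrow> 'a \<Rightarrow> real. (\<forall>n. Xs n \<in> D) \<longrightarrow>
        (AE w in P. \<forall>n. Xs (Suc n) w \<le> Xs n w) \<longrightarrow>
        (AE w in P. (\<lambda>n. Xs n w) \<longlonglongrightarrow> 0) \<longrightarrow>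
        (AE w in P. (\<lambda>n. T (Xs n) w) \<longlonglongrightarrow> 0))"

definition cont_from_above_op :: "'a measure \<Rightarrow> ('a \<Rightarrow> real) set
    \<Rightarrow> (('a \<Rightarrow> real) \<Rightarrow> ('a \<Rightarrow> real)) \<Rightarrow> bool" where
  "cont_from_above_op P D T \<longleftrightarrow>
     (\<forall>(Xs :: nat \<Rightarrow> 'a \<Rightarrow> real) X. (\<forall>n. Xs n \<in> D) \<longrightarrow> X \<in> D \<longrightarrow>
        (AE w in P. \<forall>n. Xs (Suc n) w \<le> Xs n w) \<longrightarrow>
        (AE w in P. (\<lambda>n. Xs n w) \<longlonglongrightarrow> X w) \<longrightarrow>
        (AE w in P. (\<forall>n. T (Xs (Suc n)) w \<le> T (Xs n) w) \<and>
                    (\<lambda>n. T (Xs n) w) \<longlonglongrightarrow> T X w))"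

end

theory Submission
  imports Defs
begin

lemma Linf_add: "X \<in> Linf P B \<Longrightarrow> Y \<in> Linf P B \<Longrightarrow> (\<lambda>v. X v + Y v) \<in> Linf P B"
proof -
  assume a: "X \<in> Linf P B" "Y \<in> Linf P B"
  then obtain C D where "AE w in P. \<bar>X w\<bar> \<le> C" "AE w in P. \<bar>Y w\<bar> \<le> D"
    by (auto simp: Linf_def)
  then have "AE w in P. \<bar>X w + Y w\<bar> \<le> C + D" by eventually_elim auto
  with a show ?thesis by (auto simp: Linf_def)
qed

lemma Linf_cmult: "X \<in> Linf P B \<Longrightarrow> (\<lambda>v. c * X v) \<in> Linf P B"
proof -
  assume a: "X \<in> Linf P B"
  then obtain C where "AE w in P. \<bar>X w\<bar> \<le> C" by (auto simp: Linf_def)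
  then have "AE w in P. \<bar>c * X w\<bar> \<le> \<bar>c\<bar> * C" by eventually_elim (auto simp: abs_mult mult_left_mono)
  with a show ?thesis by (auto simp: Linf_def)
qed

lemma Linf_abs: "X \<in> Linf P B \<Longrightarrow> (\<lambda>v. \<bar>X v\<bar>) \<in> Linf_pos P B"
proof -
  assume a: "X \<in> Linf P B"
  then obtain C where "AE w in P. \<bar>X w\<bar> \<le> C" by (auto simp: Linf_def)
  then have "AE w in P. \<bar>\<bar>X w\<bar>\<bar> \<le> C" by eventually_elim auto
  with a show ?thesis by (auto simp: Linf_def Linf_pos_def)
qed

lemma Linf_ind: "X \<in> Linf P B \<Longrightarrow> S \<in> sets B \<Longrightarrow> (\<lambda>v. indicator S v * X v) \<in> Linf P B"
proof -
  assume a: "X \<in> Linf P B" "S \<in> sets B"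
  then obtain C where "AE w in P. \<bar>X w\<bar> \<le> C" by (auto simp: Linf_def)
  then have "AE w in P. \<bar>indicator S w * X w\<bar> \<le> \<bar>C\<bar>"
    by eventually_elim (auto simp: indicator_def)
  with a show ?thesis by (auto simp: Linf_def)
qed

lemma Linf_zero: "(\<lambda>v. 0) \<in> Linf_pos P B"
  by (auto simp: Linf_def Linf_pos_def)

theorem proposition3p8:
  fixes P \<A> \<B> :: "'a measure"
    and x :: "('a \<Rightarrow> real) \<Rightarrow> ('a \<Rightarrow> real)"
    and M :: "('a \<Rightarrow> real) \<Rightarrow> ('a \<Rightarrow> real)"
  assumes "prob_space P" and "complete_measure P"
    and "subalgebra P \<A>" and "subalgebra P \<B>" and "sets \<A> \<subseteq> sets \<B>"
    and "operator_on P (Linf P \<B>) (Linf P \<A>) x" and "linear_op P (Linf P \<B>) x"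
    and "operator_on P (Linf_pos P \<B>) (Linf_pos P \<A>) M"
    and "sublinear_op P (Linf_pos P \<B>) M"
    and dom: "\<And>X Y. X \<in> Linf P \<B> \<Longrightarrow> Y \<in> Linf_pos P \<B> \<Longrightarrow>
               (AE w in P. X w \<le> Y w) \<Longrightarrow> (AE w in P. x X w \<le> M Y w)"
  shows "monotone_op P (Linf P \<B>) x
    \<and> (weak_hom_op P \<A> (Linf_pos P \<B>) M \<longrightarrow> weak_hom_op P \<A> (Linf P \<B>) x)
    \<and> (regular_op P (Linf_pos P \<B>) M \<longrightarrow> cont_from_above_op P (Linf P \<B>) x)"
proof -
  have xadd: "\<And>X Y. X \<in> Linf P \<B> \<Longrightarrow> Y \<in> Linf P \<B> \<Longrightarrow>
      AE w in P. x (\<lambda>v. X v + Y v) w = x X w + x Y w"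
    using assms(7) by (auto simp: linear_op_def)
  have xmul: "\<And>X c. X \<in> Linf P \<B> \<Longrightarrow> AE w in P. x (\<lambda>v. c * X v) w = c * x X w"
    using assms(7) by (auto simp: linear_op_def)
  have xcong: "\<And>X Y. X \<in> Linf P \<B> \<Longrightarrow> Y \<in> Linf P \<B> \<Longrightarrow> (AE w in P. X w = Y w) \<Longrightarrow>
      AE w in P. x X w = x Y w"
    using assms(6) by (auto simp: operator_on_def)
  have xdiff: "\<And>X Y. X \<in> Linf P \<B> \<Longrightarrow> Y \<in> Linf P \<B> \<Longrightarrow>
      AE w in P. x (\<lambda>v. X v + -1 * Y v) w = x X w - x Y w"
  proof -
    fix X Y assume XY: "X \<in> Linf P \<B>" "Y \<in> Linf P \<B>"
    have "AE w in P. x (\<lambda>v. X v + -1 * Y v) w = x X w + x (\<lambda>v. -1 * Y v) w"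
      using xadd[OF XY(1) Linf_cmult[OF XY(2), of "-1"]] .
    moreover have "AE w in P. x (\<lambda>v. -1 * Y v) w = -1 * x Y w" using xmul[OF XY(2)] .
    ultimately show "AE w in P. x (\<lambda>v. X v + -1 * Y v) w = x X w - x Y w"
      by eventually_elim simp
  qed
  have M0: "AE w in P. M (\<lambda>v. 0) w = 0"
  proof -
    have "AE w in P. M (\<lambda>v. 0 * (\<lambda>v. 0) v) w = 0 * M (\<lambda>v. 0) w"
    proof -
      have "\<forall>c::real. 0 \<le> c \<longrightarrow> (AE w in P. M (\<lambda>v. c * (\<lambda>v. 0) v) w = c * M (\<lambda>v. 0) w)"
        using bspec[OF conjunct2[OF assms(9)[unfolded sublinear_op_def]] Linf_zero[of P \<B>]] .
      then show ?thesis by blast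
    qed
    then show ?thesis by simp
  qed
  have mono: "monotone_op P (Linf P \<B>) x"
    unfolding monotone_op_def
  proof (intro ballI impI)
    fix X Y assume XY: "X \<in> Linf P \<B>" "Y \<in> Linf P \<B>" and le: "AE w in P. X w \<le> Y w"
    have Z: "(\<lambda>v. X v + -1 * Y v) \<in> Linf P \<B>" using Linf_add[OF XY(1) Linf_cmult[OF XY(2)]] .
    have "AE w in P. X w + -1 * Y w \<le> 0" using le by eventually_elim simp
    then have "AE w in P. x (\<lambda>v. X v + -1 * Y v) w \<le> M (\<lambda>v. 0) w"
      using dom[OF Z Linf_zero] by simp
    with M0 xdiff[OF XY] show "AE w in P. x X w \<le> x Y w" by eventually_elim simp
  qed
  have absb: "\<And>Z. Z \<in> Linf P \<B> \<Longrightarrow> AE w in P. \<bar>x Z w\<bar> \<le> M (\<lambda>v. \<bar>Z v\<bar>) w"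
  proof -
    fix Z assume Z: "Z \<in> Linf P \<B>"
    have "AE w in P. x Z w \<le> M (\<lambda>v. \<bar>Z v\<bar>) w"
      by (rule dom[OF Z Linf_abs[OF Z]]) simp
    moreover have "AE w in P. x (\<lambda>v. -1 * Z v) w \<le> M (\<lambda>v. \<bar>Z v\<bar>) w"
      by (rule dom[OF Linf_cmult[OF Z] Linf_abs[OF Z]]) simp
    moreover note xmul[OF Z, of "-1"]
    ultimately show "AE w in P. \<bar>x Z w\<bar> \<le> M (\<lambda>v. \<bar>Z v\<bar>) w" by eventually_elim auto
  qed
  have sp: "space \<A> = space P" using assms(3) by (simp add: subalgebra_def)
  have hom: "weak_hom_op P \<A> (Linf_pos P \<B>) M \<Longrightarrow> weak_hom_op P \<A> (Linf P \<B>) x"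
    unfolding weak_hom_op_def
  proof (intro ballI)
    fix S X assume wh: "\<forall>S\<in>sets \<A>. \<forall>X\<in>Linf_pos P \<B>.
        AE w in P. M (\<lambda>v. indicator S v * X v) w = indicator S w * M X w"
      and S: "S \<in> sets \<A>" and X: "X \<in> Linf P \<B>"
    define T where "T = space \<A> - S"
    have T: "T \<in> sets \<A>" using S by (auto simp: T_def)
    have SB: "S \<in> sets \<B>" "T \<in> sets \<B>" using S T assms(5) by auto
    have bnd: "AE w in P. \<bar>x (\<lambda>v. indicator U v * X v) w\<bar> \<le> indicator U w * M (\<lambda>v. \<bar>X v\<bar>) w"
      if U: "U \<in> sets \<A>" "U \<in> sets \<B>" for U
    proof -
      have e: "(\<lambda>v. \<bar>indicator U v * X v\<bar>) = (\<lambda>v. indicator U v * \<bar>X v\<bar>)"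
        by (auto simp: indicator_def)
      have "AE w in P. \<bar>x (\<lambda>v. indicator U v * X v) w\<bar> \<le> M (\<lambda>v. indicator U v * \<bar>X v\<bar>) w"
        using absb[OF Linf_ind[OF X U(2)]] unfolding e .
      moreover have "AE w in P. M (\<lambda>v. indicator U v * \<bar>X v\<bar>) w = indicator U w * M (\<lambda>v. \<bar>X v\<bar>) w"
        using bspec[OF bspec[OF wh U(1)] Linf_abs[OF X]] .
      ultimately show ?thesis by eventually_elim simp
    qed
    have Z1: "(\<lambda>v. indicator S v * X v) \<in> Linf P \<B>" using Linf_ind[OF X SB(1)] .
    have Z2: "(\<lambda>v. indicator T v * X v) \<in> Linf P \<B>" using Linf_ind[OF X SB(2)] .
    have "AE w in P. (\<lambda>v. indicator S v * X v + indicator T v * X v) w = X w"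
      using AE_space[of P] by eventually_elim (auto simp: T_def sp indicator_def)
    then have "AE w in P. x (\<lambda>v. indicator S v * X v + indicator T v * X v) w = x X w"
      by (intro xcong Linf_add Z1 Z2 X)
    moreover note xadd[OF Z1 Z2] bnd[OF S SB(1)] bnd[OF T SB(2)] AE_space[of P]
    ultimately show "AE w in P. x (\<lambda>v. indicator S v * X v) w = indicator S w * x X w"
      by eventually_elim (auto simp: T_def sp indicator_def split: if_splits)
  qed
  have cont: "regular_op P (Linf_pos P \<B>) M \<Longrightarrow> cont_from_above_op P (Linf P \<B>) x"
    unfolding cont_from_above_op_def
  proof (intro allI impI)
    fix Xs X assume reg: "regular_op P (Linf_pos P \<B>) M"
      and Xs: "\<forall>n. Xs n \<in> Linf P \<B>" and X: "X \<in> Linf P \<B>"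
      and dec: "AE w in P. \<forall>n. Xs (Suc n) w \<le> Xs n w"
      and lim: "AE w in P. (\<lambda>n. Xs n w) \<longlonglongrightarrow> X w"
    define Y where "Y n = (\<lambda>v. Xs n v + -1 * X v)" for n
    have ge: "AE w in P. \<forall>n. X w \<le> Xs n w"
      using dec lim by eventually_elim (metis decseq_ge decseq_SucI)
    have YL: "Y n \<in> Linf P \<B>" for n
      unfolding Y_def using Linf_add[OF _ Linf_cmult[OF X]] Xs by blast
    have Yp: "Y n \<in> Linf_pos P \<B>" for n
    proof -
      have "AE w in P. 0 \<le> Y n w" using ge by eventually_elim (auto simp: Y_def)
      with YL show ?thesis by (simp add: Linf_pos_def)
    qed
    have Ydec: "AE w in P. \<forall>n. Y (Suc n) w \<le> Y n w"
      using dec by eventually_elim (auto simp: Y_def)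
    have Ylim: "AE w in P. (\<lambda>n. Y n w) \<longlonglongrightarrow> 0"
      using lim
    proof eventually_elim
      case (elim w)
      then have "(\<lambda>n. Xs n w + -1 * X w) \<longlonglongrightarrow> X w + -1 * X w"
        by (intro tendsto_intros)
      then show ?case by (simp add: Y_def)
    qed
    have Mlim: "AE w in P. (\<lambda>n. M (Y n) w) \<longlonglongrightarrow> 0"
      using reg Yp Ydec Ylim unfolding regular_op_def by blast
    have xdec: "AE w in P. \<forall>n. x (Xs (Suc n)) w \<le> x (Xs n) w"
      unfolding AE_all_countable
    proof
      fix n
      have "AE w in P. Xs (Suc n) w \<le> Xs n w" using dec by eventually_elim auto
      then show "AE w in P. x (Xs (Suc n)) w \<le> x (Xs n) w"
        using mono Xs unfolding monotone_op_def by blast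
    qed
    have xge: "AE w in P. \<forall>n. x X w \<le> x (Xs n) w"
      unfolding AE_all_countable
    proof
      fix n
      have "AE w in P. X w \<le> Xs n w" using ge by eventually_elim auto
      then show "AE w in P. x X w \<le> x (Xs n) w"
        using mono Xs X unfolding monotone_op_def by blast
    qed
    have xY: "AE w in P. \<forall>n. x (Y n) w = x (Xs n) w - x X w"
      unfolding AE_all_countable Y_def using xdiff Xs X by blast
    have xM: "AE w in P. \<forall>n. x (Y n) w \<le> M (Y n) w"
      unfolding AE_all_countable using dom YL Yp by blast
    show "AE w in P. (\<forall>n. x (Xs (Suc n)) w \<le> x (Xs n) w) \<and> (\<lambda>n. x (Xs n) w) \<longlonglongrightarrow> x X w"
      using xdec xge xY xM Mlim
    proof eventually_elim
      case (elim w)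
      have "(\<lambda>n. x (Xs n) w - x X w) \<longlonglongrightarrow> 0"
        by (rule tendsto_sandwich[of "\<lambda>n. 0" _ _ "\<lambda>n. M (Y n) w"])
           (use elim in auto)
      then have "(\<lambda>n. x (Xs n) w - x X w + x X w) \<longlonglongrightarrow> 0 + x X w"
        by (intro tendsto_intros)
      then show ?case using elim by simp
    qed
  qed
  show ?thesis using mono hom cont by blast
qed

end
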